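(* Consider the coding-DNA embedding setting described in the context, and let $C_\mathrm{c}=\max_{p(x')} R_\mathrm{c}^{X'}$, the maximum over all probability distributions of $X'$ on $\mathcal{X}'$. Then $C_\mathrm{c}$ is achieved by a deterministic distribution of $X'$, namely the point mass $p(x')=\mathbb{1}[x'=\xi']$ at the amino acid $\xi'\in\mathcal{X}'$ for which the (maximised over $p(\mathbf{u}|\xi')$) output entropy $H(\mathbf{Z}_{(m)})$ is largest among the 21 deterministic distributions of $X'$.
   Context: Let $\mathcal{X}=\{\mathrm{A},\mathrm{C},\mathrm{T},\mathrm{G}\}$ (DNA bases); codons are elements of $\mathcal{X}^3$. Let $\mathcal{X}'=\{$Ala, Arg, Asn, Asp, Cys, Gln, Glu, Gly, His, Ile, Leu, Lys, Met, Phe, Pro, Ser, Thr, Trp, Tyr, Val, Stp$\}$. The genetic code is the map $\alpha:\mathcal{X}^3\to\mathcal{X}'$ whose fibres $\mathcal{S}_{x'}=\{\mathbf{x}\in\mathcal{X}^3:\alpha(\mathbf{x})=x'\}$ are: Ala: GCA, GCC, GCT, GCG; Arg: AGA, AGG, CGA, CGC, CGT, CGG; Asn: AAC, AAT; Asp: GAC, GAT; Cys: TGC, TGT; Gln: CAA, CAG; Glu: GAA, GAG; Gly: GGA, GGC, GGT, GGG; His: CAC, CAT; Ile: ATA, ATC, ATT; Leu: CTA, CTC, CTT, CTG, TTA, TTG; Lys: AAA, AAG; Met: ATG; Phe: TTC, TTT; Pro: CCA, CCC, CCT, CCG; Ser: AGC, AGT, TCA, TCC, TCT, TCG; Thr: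 ACA, ACC, ACT, ACG; Trp: TGG; Tyr: TAC, TAT; Val: GTA, GTC, GTT, GTG; Stp: TAA, TAG, TGA. These 21 sets partition $\mathcal{X}^3$. Mutation channel (Kimura model): for parameters $q\in[0,1]$ and $\gamma\in[0,3/2]$, the $4\times4$ base transition matrix $\Pi=[p(Z=z|Y=y)]$ (rows/columns ordered A, C, T, G) has diagonal entries $1-q$, entries $(1-2\gamma/3)q$ for the pairs $\{\mathrm{A},\mathrm{G}\}$ and $\{\mathrm{C},\mathrm{T}\}$, and entries $\gamma q/3$ for all other off-diagonal pairs. After $m\ge1$ cascaded independent mutation stages, a codon $\mathbf{u}$ is mapped to a random codon $\mathbf{Z}_{(m)}$ through the $64\times64$ transition matrix $\Pi^m\otimes\Pi^m\otimes\Pi^m$ (bases mutate independently). Achievable rate: given a distribution $p(x')$ of the host amino acid $X'$ on $\mathcal{X}'$, consider conditional distributions $p(\mathbf{u}|x')$ supported on $\mathcal{S}_{x'}$, and let $\mathbf{U}$ be the codon with $p(\mathbf{u})=p(x')p(\mathbf{u}|x')$ for $\mathbf{u}\in\mathcal{S}_{x'}$; $\mathbf{U}$ is the channel input and $\mathbf{Z}_{(m)}$ the output. The achievable rate is $R_\mathrm{c}^{X'}=\max_{p(\mathbf{u}|x')} I(\mathbf{Z}_{(m)};\mathbf{U})-H(X')$ bits/codon (logarithms base 2). *)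

theory Defs
  imports "HOL-Analysis.Analysis"
begin

datatype base = BA | BC | BT | BG

lemma UNIV_base: "(UNIV :: base set) = {BA, BC, BT, BG}"
  using base.exhaust by auto

instance base :: finite
  by standard (simp add: UNIV_base)

type_synonym codon = "base \<times> base \<times> base"

text \<open>The 21 elements of X' (20 amino acids and the stop symbol).\<close>
datatype aa = Ala | Arg | Asn | Asp | Cys | Gln | Glu | Gly | His | Ile | Leu
  | Lys | Met | Phe | Pro | Ser | Thr | Trp | Tyr | Val | Stp

lemma UNIV_aa: "(UNIV :: aa set) =
  {Ala, Arg, Asn, Asp, Cys, Gln, Glu, Gly, His, Ile, Leu, Lys, Met, Phe, Pro, Ser, Thr, Trp, Tyr, Val, Stp}"
  using aa.exhaust by auto

instance aa :: finite
  by standard (simp add: UNIV_aa)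

fun gcode :: "codon \<Rightarrow> aa" where
  "gcode (BG, BC, BA) = Ala" |
  "gcode (BG, BC, BC) = Ala" |
  "gcode (BG, BC, BT) = Ala" |
  "gcode (BG, BC, BG) = Ala" |
  "gcode (BA, BG, BA) = Arg" |
  "gcode (BA, BG, BG) = Arg" |
  "gcode (BC, BG, BA) = Arg" |
  "gcode (BC, BG, BC) = Arg" |
  "gcode (BC, BG, BT) = Arg" |
  "gcode (BC, BG, BG) = Arg" |
  "gcode (BA, BA, BC) = Asn" |
  "gcode (BA, BA, BT) = Asn" |
  "gcode (BG, BA, BC) = Asp" |
  "gcode (BG, BA, BT) = Asp" |
  "gcode (BT, BG, BC) = Cys" |
  "gcode (BT, BG, BT) = Cys" |
  "gcode (BC, BA, BA) = Gln" |
  "gcode (BC, BA, BG) = Gln" |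
  "gcode (BG, BA, BA) = Glu" |
  "gcode (BG, BA, BG) = Glu" |
  "gcode (BG, BG, BA) = Gly" |
  "gcode (BG, BG, BC) = Gly" |
  "gcode (BG, BG, BT) = Gly" |
  "gcode (BG, BG, BG) = Gly" |
  "gcode (BC, BA, BC) = His" |
  "gcode (BC, BA, BT) = His" |
  "gcode (BA, BT, BA) = Ile" |
  "gcode (BA, BT, BC) = Ile" |
  "gcode (BA, BT, BT) = Ile" |
  "gcode (BC, BT, BA) = Leu" |
  "gcode (BC, BT, BC) = Leu" |
  "gcode (BC, BT, BT) = Leu" |
  "gcode (BC, BT, BG) = Leu" |
  "gcode (BT, BT, BA) = Leu" |
  "gcode (BT, BT, BG) = Leu" |
  "gcode (BA, BA, BA) = Lys" |
  "gcode (BA, BA, BG) = Lys" |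
  "gcode (BA, BT, BG) = Met" |
  "gcode (BT, BT, BC) = Phe" |
  "gcode (BT, BT, BT) = Phe" |
  "gcode (BC, BC, BA) = Pro" |
  "gcode (BC, BC, BC) = Pro" |
  "gcode (BC, BC, BT) = Pro" |
  "gcode (BC, BC, BG) = Pro" |
  "gcode (BA, BG, BC) = Ser" |
  "gcode (BA, BG, BT) = Ser" |
  "gcode (BT, BC, BA) = Ser" |
  "gcode (BT, BC, BC) = Ser" |
  "gcode (BT, BC, BT) = Ser" |
  "gcode (BT, BC, BG) = Ser" |
  "gcode (BA, BC, BA) = Thr" |
  "gcode (BA, BC, BC) = Thr" |
  "gcode (BA, BC, BT) = Thr" |
  "gcode (BA, BC, BG) = Thr" |
  "gcode (BT, BG, BG) = Trp" |
  "gcode (BT, BA, BC) = Tyr" |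
  "gcode (BT, BA, BT) = Tyr" |
  "gcode (BG, BT, BA) = Val" |
  "gcode (BG, BT, BC) = Val" |
  "gcode (BG, BT, BT) = Val" |
  "gcode (BG, BT, BG) = Val" |
  "gcode (BT, BA, BA) = Stp" |
  "gcode (BT, BA, BG) = Stp" |
  "gcode (BT, BG, BA) = Stp"

definition fibre :: "aa \<Rightarrow> codon set" where
  "fibre x' = {u. gcode u = x'}"

text \<open>Kimura base transition matrix Pi (row y, column z): p(Z=z|Y=y).\<close>
definition transition_pair :: "base \<Rightarrow> base \<Rightarrow> bool" where
  "transition_pair y z \<longleftrightarrow> {y, z} = {BA, BG} \<or> {y, z} = {BC, BT}"

definition kimura :: "real \<Rightarrow> real \<Rightarrow> base \<Rightarrow> base \<Rightarrow> real" where
  "kimura q \<gamma> y z =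
     (if y = z then 1 - q
      else if transition_pair y z then (1 - 2 * \<gamma> / 3) * q
      else \<gamma> * q / 3)"

fun kimura_pow :: "real \<Rightarrow> real \<Rightarrow> nat \<Rightarrow> base \<Rightarrow> base \<Rightarrow> real" where
  "kimura_pow q \<gamma> 0 y z = (if y = z then 1 else 0)"
| "kimura_pow q \<gamma> (Suc n) y z = (\<Sum>w\<in>UNIV. kimura_pow q \<gamma> n y w * kimura q \<gamma> w z)"

definition codon_chan :: "real \<Rightarrow> real \<Rightarrow> nat \<Rightarrow> codon \<Rightarrow> codon \<Rightarrow> real" where
  "codon_chan q \<gamma> m u z =
     (case u of (u1, u2, u3) \<Rightarrow> case z of (z1, z2, z3) \<Rightarrow>
        kimura_pow q \<gamma> m u1 z1 * kimura_pow q \<gamma> m u2 z2 * kimura_pow q \<gamma> m u3 z3)"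

definition is_dist :: "(aa \<Rightarrow> real) \<Rightarrow> bool" where
  "is_dist p \<longleftrightarrow> (\<forall>x. 0 \<le> p x) \<and> (\<Sum>x\<in>UNIV. p x) = 1"

definition is_cond :: "(aa \<Rightarrow> codon \<Rightarrow> real) \<Rightarrow> bool" where
  "is_cond c \<longleftrightarrow> (\<forall>x' u. 0 \<le> c x' u) \<and> (\<forall>x' u. u \<notin> fibre x' \<longrightarrow> c x' u = 0)
                  \<and> (\<forall>x'. (\<Sum>u\<in>fibre x'. c x' u) = 1)"

definition pU :: "(aa \<Rightarrow> real) \<Rightarrow> (aa \<Rightarrow> codon \<Rightarrow> real) \<Rightarrow> codon \<Rightarrow> real" where
  "pU p c u = p (gcode u) * c (gcode u) u"

definition pZ :: "real \<Rightarrow> real \<Rightarrow> nat \<Rightarrow> (aa \<Rightarrow> real) \<Rightarrow> (aa \<Rightarrow> codon \<Rightarrow> real) \<Rightarrow> codon \<Rightarrow> real" where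
  "pZ q \<gamma> m p c z = (\<Sum>u\<in>UNIV. pU p c u * codon_chan q \<gamma> m u z)"

definition plog :: "real \<Rightarrow> real" where
  "plog t = (if t = 0 then 0 else t * log 2 t)"

definition entropy_X :: "(aa \<Rightarrow> real) \<Rightarrow> real" where
  "entropy_X p = - (\<Sum>x\<in>UNIV. plog (p x))"

definition entropy_Z :: "real \<Rightarrow> real \<Rightarrow> nat \<Rightarrow> (aa \<Rightarrow> real) \<Rightarrow> (aa \<Rightarrow> codon \<Rightarrow> real) \<Rightarrow> real" where
  "entropy_Z q \<gamma> m p c = - (\<Sum>z\<in>UNIV. plog (pZ q \<gamma> m p c z))"

definition mutual_info :: "real \<Rightarrow> real \<Rightarrow> nat \<Rightarrow> (aa \<Rightarrow> real) \<Rightarrow> (aa \<Rightarrow> codon \<Rightarrow> real) \<Rightarrow> real" where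
  "mutual_info q \<gamma> m p c =
     (\<Sum>u\<in>UNIV. \<Sum>z\<in>UNIV.
        (let j = pU p c u * codon_chan q \<gamma> m u z in
         if j = 0 then 0 else j * log 2 (codon_chan q \<gamma> m u z / pZ q \<gamma> m p c z)))"

definition rate :: "real \<Rightarrow> real \<Rightarrow> nat \<Rightarrow> (aa \<Rightarrow> real) \<Rightarrow> real" where
  "rate q \<gamma> m p = (SUP c\<in>{c. is_cond c}. mutual_info q \<gamma> m p c - entropy_X p)"

definition capacity :: "real \<Rightarrow> real \<Rightarrow> nat \<Rightarrow> real" where
  "capacity q \<gamma> m = (SUP p\<in>{p. is_dist p}. rate q \<gamma> m p)"

definition point_mass :: "aa \<Rightarrow> aa \<Rightarrow> real" where
  "point_mass \<xi> = (\<lambda>x. if x = \<xi> then 1 else 0)"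

definition max_out_entropy :: "real \<Rightarrow> real \<Rightarrow> nat \<Rightarrow> aa \<Rightarrow> real" where
  "max_out_entropy q \<gamma> m \<xi> = (SUP c\<in>{c. is_cond c}. entropy_Z q \<gamma> m (point_mass \<xi>) c)"

end

theory Submission
  imports Defs
begin


fun bx :: "base \<Rightarrow> base \<Rightarrow> base" where
  "bx BA b = b"
| "bx BG b = (case b of BA \<Rightarrow> BG | BG \<Rightarrow> BA | BC \<Rightarrow> BT | BT \<Rightarrow> BC)"
| "bx BC b = (case b of BA \<Rightarrow> BC | BG \<Rightarrow> BT | BC \<Rightarrow> BA | BT \<Rightarrow> BG)"
| "bx BT b = (case b of BA \<Rightarrow> BT | BG \<Rightarrow> BC | BC \<Rightarrow> BG | BT \<Rightarrow> BA)"

lemma bx_inv[simp]: "bx t (bx t y) = y" by (cases t; cases y; simp)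
lemma bx_self: "bx t t = BA" by (cases t; simp)
lemma bx_eq_iff[simp]: "bx t y = bx t z \<longleftrightarrow> y = z" by (metis bx_inv)

lemma kimura_bx: "kimura q g (bx t y) (bx t z) = kimura q g y z"
  by (cases t; cases y; cases z) (auto simp: kimura_def transition_pair_def doubleton_eq_iff)

lemma sum_bx: "(\<Sum>w\<in>UNIV. f (bx t w)) = (\<Sum>w\<in>UNIV. (f w :: real))"
  by (rule sum.reindex_bij_witness[of _ "bx t" "bx t"]) auto

lemma kpow_bx: "kimura_pow q g n (bx t y) (bx t z) = kimura_pow q g n y z"
proof (induction n arbitrary: z)
  case 0 show ?case by simp
next
  case (Suc n)
  have "kimura_pow q g (Suc n) (bx t y) (bx t z) = (\<Sum>w\<in>UNIV. kimura_pow q g n (bx t y) (bx t w) * kimura q g (bx t w) (bx t z))"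
    using sum_bx[where f="\<lambda>w. kimura_pow q g n (bx t y) w * kimura q g w (bx t z)" and t=t] by simp
  also have "\<dots> = kimura_pow q g (Suc n) y z" by (simp add: Suc kimura_bx)
  finally show ?case .
qed

lemma kpow_BA[simp]: "kimura_pow q g n BA (bx y z) = kimura_pow q g n y z"
  using kpow_bx[of q g n y y z] by (simp add: bx_self)


definition cx :: "codon \<Rightarrow> codon \<Rightarrow> codon" where
  "cx u z = (bx (fst u) (fst z), bx (fst (snd u)) (fst (snd z)), bx (snd (snd u)) (snd (snd z)))"

lemma cx_inv[simp]: "cx u (cx u z) = z" by (simp add: cx_def)

lemma chan_cx: "codon_chan q g m u z = codon_chan q g m (BA,BA,BA) (cx u z)"
  by (cases u; cases z) (simp add: codon_chan_def cx_def)

lemma row_const: "(\<Sum>z\<in>UNIV. plog (codon_chan q g m u z)) = (\<Sum>z\<in>UNIV. plog (codon_chan q g m (BA,BA,BA) z))"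
proof -
  have "(\<Sum>z\<in>UNIV. plog (codon_chan q g m u z)) = (\<Sum>z\<in>UNIV. plog (codon_chan q g m (BA,BA,BA) (cx u z)))"
    by (rule sum.cong[OF refl]) (rule arg_cong[OF chan_cx])
  also have "\<dots> = (\<Sum>z\<in>UNIV. plog (codon_chan q g m (BA,BA,BA) z))"
    by (rule sum.reindex_bij_witness[of _ "cx u" "cx u"]) auto
  finally show ?thesis .
qed

lemma kimura_nonneg: "0 \<le> q \<Longrightarrow> q \<le> 1 \<Longrightarrow> 0 \<le> g \<Longrightarrow> g \<le> 3/2 \<Longrightarrow> 0 \<le> kimura q g y z"
  by (auto simp: kimura_def)

lemma kpow_nonneg: "0 \<le> q \<Longrightarrow> q \<le> 1 \<Longrightarrow> 0 \<le> g \<Longrightarrow> g \<le> 3/2 \<Longrightarrow> 0 \<le> kimura_pow q g n y z"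
  by (induction n arbitrary: z) (auto intro!: sum_nonneg mult_nonneg_nonneg kimura_nonneg)

lemma chan_nonneg: "0 \<le> q \<Longrightarrow> q \<le> 1 \<Longrightarrow> 0 \<le> g \<Longrightarrow> g \<le> 3/2 \<Longrightarrow> 0 \<le> codon_chan q g m u z"
  by (cases u; cases z) (auto simp: codon_chan_def intro!: mult_nonneg_nonneg kpow_nonneg)

lemma kimura_row: "(\<Sum>z\<in>UNIV. kimura q g y z) = 1"
  by (cases y) (simp_all add: UNIV_base kimura_def transition_pair_def doubleton_eq_iff algebra_simps)

lemma kpow_row: "(\<Sum>z\<in>UNIV. kimura_pow q g n y z) = 1"
proof (induction n)
  case 0 show ?case by (simp add: sum.delta)
next
  case (Suc n)
  have "(\<Sum>z\<in>UNIV. kimura_pow q g (Suc n) y z) = (\<Sum>w\<in>UNIV. kimura_pow q g n y w * (\<Sum>z\<in>UNIV. kimura q g w z))"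
  proof -
    have "(\<Sum>z\<in>UNIV. kimura_pow q g (Suc n) y z) = (\<Sum>z\<in>UNIV. \<Sum>w\<in>UNIV. kimura_pow q g n y w * kimura q g w z)" by simp
    also have "\<dots> = (\<Sum>w\<in>UNIV. \<Sum>z\<in>UNIV. kimura_pow q g n y w * kimura q g w z)" by (rule sum.swap)
    finally show ?thesis by (simp add: sum_distrib_left)
  qed
  also have "\<dots> = 1" by (simp add: kimura_row Suc)
  finally show ?case .
qed

lemma sum_codon: "(\<Sum>z\<in>(UNIV::codon set). f z) = (\<Sum>a\<in>UNIV. \<Sum>b\<in>UNIV. \<Sum>c\<in>UNIV. (f (a,b,c) :: real))"
  by (simp add: sum.cartesian_product UNIV_Times_UNIV[symmetric] del: UNIV_Times_UNIV)

lemma chan_row: "(\<Sum>z\<in>UNIV. codon_chan q g m u z) = 1"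
  by (cases u) (simp add: sum_codon codon_chan_def sum_distrib_left[symmetric] sum_distrib_right[symmetric] kpow_row)



lemma plog_mult: "0 \<le> a \<Longrightarrow> 0 \<le> b \<Longrightarrow> plog (a*b) = b * plog a + a * plog b"
  by (auto simp: plog_def log_mult algebra_simps)

lemma plog_add: assumes "0 \<le> a" "0 \<le> b" shows "plog a + plog b \<le> plog (a+b)"
proof (cases "a = 0 \<or> b = 0")
  case True then show ?thesis by (auto simp: plog_def)
next
  case False
  then have a: "0 < a" and b: "0 < b" using assms by auto
  have "log 2 a \<le> log 2 (a+b)" "log 2 b \<le> log 2 (a+b)" using a b by auto
  then have "a * log 2 a \<le> a * log 2 (a+b)" "b * log 2 b \<le> b * log 2 (a+b)"
    using a b by (auto intro: mult_left_mono)
  then have "a * log 2 a + b * log 2 b \<le> a * log 2 (a+b) + b * log 2 (a+b)" by (rule add_mono)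
  then show ?thesis using a b by (simp add: plog_def algebra_simps)
qed

lemma plog_sum: "finite A \<Longrightarrow> (\<forall>x\<in>A. 0 \<le> f x) \<Longrightarrow> (\<Sum>x\<in>A. plog (f x)) \<le> plog (\<Sum>x\<in>A. f x)"
proof (induction A rule: finite_induct)
  case empty then show ?case by (simp add: plog_def)
next
  case (insert a A)
  have "(\<Sum>x\<in>insert a A. plog (f x)) = plog (f a) + (\<Sum>x\<in>A. plog (f x))" using insert by simp
  also have "\<dots> \<le> plog (f a) + plog (\<Sum>x\<in>A. f x)" using insert by simp
  also have "\<dots> \<le> plog (f a + (\<Sum>x\<in>A. f x))" using insert by (intro plog_add) (auto intro: sum_nonneg)
  finally show ?case using insert by simp
qed

lemma plog_lb: assumes "0 \<le> t" shows "-2 \<le> plog t"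
proof (cases "t = 0")
  case True then show ?thesis by (simp add: plog_def)
next
  case False
  then have t: "0 < t" using assms by simp
  have "ln (1/t) \<le> 1/t - 1" using t by (intro ln_le_minus_one) simp
  then have "1 - 1/t \<le> ln t" using t by (simp add: ln_div)
  then have "t * (1 - 1/t) \<le> t * ln t" using t by (intro mult_left_mono) auto
  then have 1: "t - 1 \<le> t * ln t" using t by (simp add: algebra_simps)
  have l2: "1/2 < ln (2::real)" using ln_2_less_1 ln2_ge_two_thirds by (auto)
  have "plog t = t * ln t / ln 2" using t by (simp add: plog_def log_def)
  moreover have "-1 / ln 2 \<le> t * ln t / ln 2" using 1 t l2 by (intro divide_right_mono) auto
  moreover have "-2 \<le> -1 / ln (2::real)" using l2 by (simp add: field_simps)
  ultimately show ?thesis by linarith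
qed



definition par :: "real \<Rightarrow> real \<Rightarrow> bool" where
  "par q g \<longleftrightarrow> 0 \<le> q \<and> q \<le> 1 \<and> 0 \<le> g \<and> g \<le> 3/2"

lemma chan_nn: "par q g \<Longrightarrow> 0 \<le> codon_chan q g m u z"
  by (simp add: par_def chan_nonneg)

lemma pU_cond: assumes "is_cond c" shows "pU p c u = (\<Sum>x\<in>UNIV. p x * c x u)"
proof -
  have "\<And>x. p x * c x u = (if x = gcode u then p (gcode u) * c (gcode u) u else 0)"
  proof -
    fix x
    have "x \<noteq> gcode u \<Longrightarrow> c x u = 0" using assms unfolding is_cond_def fibre_def by (metis mem_Collect_eq)
    then show "p x * c x u = (if x = gcode u then p (gcode u) * c (gcode u) u else 0)" by auto
  qed
  then have "(\<Sum>x\<in>UNIV. p x * c x u) = (\<Sum>x\<in>UNIV. if x = gcode u then p (gcode u) * c (gcode u) u else 0)"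
    by (intro sum.cong) auto
  then show ?thesis by (simp add: pU_def)
qed

lemma pU_point: "is_cond c \<Longrightarrow> pU (point_mass x) c u = c x u"
proof -
  assume "is_cond c"
  moreover have "\<And>xa. point_mass x xa * c xa u = (if xa = x then c x u else 0)" by (simp add: point_mass_def)
  ultimately show ?thesis by (simp add: pU_cond)
qed

lemma sum_c: assumes "is_cond c" shows "(\<Sum>u\<in>UNIV. c x u) = 1"
proof -
  have "(\<Sum>u\<in>UNIV. c x u) = (\<Sum>u\<in>fibre x. c x u)"
    using assms by (intro sum.mono_neutral_right) (auto simp: is_cond_def)
  then show ?thesis using assms by (simp add: is_cond_def)
qed

lemma pZ_point: "is_cond c \<Longrightarrow> pZ q g m (point_mass x) c z = (\<Sum>u\<in>UNIV. c x u * codon_chan q g m u z)"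
  by (simp add: pZ_def pU_point)

lemma pZ_mix: assumes "is_cond c"
  shows "pZ q g m p c z = (\<Sum>x\<in>UNIV. p x * pZ q g m (point_mass x) c z)"
proof -
  have "pZ q g m p c z = (\<Sum>u\<in>UNIV. \<Sum>x\<in>UNIV. p x * (c x u * codon_chan q g m u z))"
    using assms by (simp add: pZ_def pU_cond sum_distrib_right mult.assoc)
  also have "\<dots> = (\<Sum>x\<in>UNIV. \<Sum>u\<in>UNIV. p x * (c x u * codon_chan q g m u z))" by (rule sum.swap)
  also have "\<dots> = (\<Sum>x\<in>UNIV. p x * pZ q g m (point_mass x) c z)"
    using assms by (simp add: pZ_point sum_distrib_left)
  finally show ?thesis .
qed

lemma pZ_point_sum: assumes "is_cond c" shows "(\<Sum>z\<in>UNIV. pZ q g m (point_mass x) c z) = 1"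
proof -
  have "(\<Sum>z\<in>UNIV. pZ q g m (point_mass x) c z) = (\<Sum>z\<in>UNIV. \<Sum>u\<in>UNIV. c x u * codon_chan q g m u z)"
    using assms by (simp add: pZ_point)
  also have "\<dots> = (\<Sum>u\<in>UNIV. \<Sum>z\<in>UNIV. c x u * codon_chan q g m u z)" by (rule sum.swap)
  also have "\<dots> = 1" using assms by (simp add: sum_distrib_left[symmetric] chan_row sum_c)
  finally show ?thesis .
qed

lemma pU_nn: "is_dist p \<Longrightarrow> is_cond c \<Longrightarrow> 0 \<le> pU p c u"
  unfolding pU_def is_dist_def is_cond_def by (blast intro: mult_nonneg_nonneg)

lemma pZ_nn: "par q g \<Longrightarrow> is_dist p \<Longrightarrow> is_cond c \<Longrightarrow> 0 \<le> pZ q g m p c z"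
  unfolding pZ_def by (intro sum_nonneg mult_nonneg_nonneg pU_nn chan_nn) auto

lemma sum_pU: assumes "is_dist p" "is_cond c" shows "(\<Sum>u\<in>UNIV. pU p c u) = 1"
proof -
  have "(\<Sum>u\<in>UNIV. pU p c u) = (\<Sum>u\<in>UNIV. \<Sum>x\<in>UNIV. p x * c x u)" using assms by (simp add: pU_cond)
  also have "\<dots> = (\<Sum>x\<in>UNIV. \<Sum>u\<in>UNIV. p x * c x u)" by (rule sum.swap)
  also have "\<dots> = 1" using assms by (simp add: sum_distrib_left[symmetric] sum_c is_dist_def)
  finally show ?thesis .
qed

lemma point_dist: "is_dist (point_mass x)"
  by (simp add: is_dist_def point_mass_def)

lemma entropy_bound: assumes "par q g" "is_dist p" "is_cond c"
  shows "entropy_Z q g m p c \<le> 2 * real (card (UNIV :: codon set))"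
proof -
  have "(\<Sum>z\<in>(UNIV::codon set). (-2::real)) \<le> (\<Sum>z\<in>UNIV. plog (pZ q g m p c z))"
  proof (rule sum_mono)
    fix z show "-2 \<le> plog (pZ q g m p c z)" using plog_lb pZ_nn assms by blast
  qed
  then show ?thesis by (simp add: entropy_Z_def)
qed


definition hrow :: "real \<Rightarrow> real \<Rightarrow> nat \<Rightarrow> real" where
  "hrow q g m = - (\<Sum>z\<in>UNIV. plog (codon_chan q g m (BA,BA,BA) z))"

lemma mi_eq: assumes "par q g" "is_dist p" "is_cond c"
  shows "mutual_info q g m p c = entropy_Z q g m p c - hrow q g m"
proof -
  let ?U = "pU p c" and ?K = "codon_chan q g m" and ?Z = "pZ q g m p c"
  have tm: "(let j = ?U u * ?K u z in if j = 0 then 0 else j * log 2 (?K u z / ?Z z))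
     = ?U u * plog (?K u z) - (if ?Z z = 0 then 0 else ?U u * ?K u z * log 2 (?Z z))" for u z
  proof -
    have U: "0 \<le> ?U u" and K: "0 \<le> ?K u z" using assms pU_nn chan_nn by auto
    have Zge: "?U u * ?K u z \<le> ?Z z" unfolding pZ_def
      by (rule member_le_sum) (use assms pU_nn chan_nn in \<open>auto intro: mult_nonneg_nonneg\<close>)
    show ?thesis
    proof (cases "?U u * ?K u z = 0")
      case True then show ?thesis by (auto simp: plog_def Let_def)
    next
      case False
      then have "0 < ?U u" "0 < ?K u z" using U K by (auto simp: order_le_less)
      moreover have "0 < ?Z z" using False U K Zge by (smt (verit) mult_nonneg_nonneg)
      ultimately show ?thesis using False by (simp add: Let_def plog_def log_divide algebra_simps)
    qed
  qed
  have s2: "(\<Sum>u\<in>UNIV. (if ?Z z = 0 then 0 else ?U u * ?K u z * log 2 (?Z z))) = plog (?Z z)" for z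
    by (auto simp: plog_def pZ_def sum_distrib_right)
  have "mutual_info q g m p c = (\<Sum>u\<in>UNIV. \<Sum>z\<in>UNIV. ?U u * plog (?K u z) - (if ?Z z = 0 then 0 else ?U u * ?K u z * log 2 (?Z z)))"
    unfolding mutual_info_def using tm by simp
  also have "\<dots> = (\<Sum>u\<in>UNIV. ?U u * (\<Sum>z\<in>UNIV. plog (?K u z))) - (\<Sum>u\<in>UNIV. \<Sum>z\<in>UNIV. (if ?Z z = 0 then 0 else ?U u * ?K u z * log 2 (?Z z)))"
    by (simp add: sum_subtractf sum_distrib_left)
  also have "(\<Sum>u\<in>UNIV. \<Sum>z\<in>UNIV. (if ?Z z = 0 then 0 else ?U u * ?K u z * log 2 (?Z z)))
      = (\<Sum>z\<in>UNIV. \<Sum>u\<in>UNIV. (if ?Z z = 0 then 0 else ?U u * ?K u z * log 2 (?Z z)))" by (rule sum.swap)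
  also have "\<dots> = (\<Sum>z\<in>UNIV. plog (?Z z))" using s2 by simp
  also have "(\<Sum>u\<in>UNIV. ?U u * (\<Sum>z\<in>UNIV. plog (?K u z))) = (\<Sum>u\<in>UNIV. ?U u) * (- hrow q g m)"
  proof -
    have "\<And>u. (\<Sum>z\<in>UNIV. plog (?K u z)) = - hrow q g m" unfolding hrow_def by (subst row_const) simp
    then show ?thesis by (simp add: sum_distrib_right sum_negf)
  qed
  finally show ?thesis using assms by (simp add: sum_pU entropy_Z_def)
qed


lemma mix_ineq: assumes "par q g" "is_dist p" "is_cond c"
  shows "entropy_Z q g m p c \<le> entropy_X p + (\<Sum>x\<in>UNIV. p x * entropy_Z q g m (point_mass x) c)"
proof -
  let ?P = "\<lambda>x z. pZ q g m (point_mass x) c z"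
  have p0: "\<And>x. 0 \<le> p x" using assms by (simp add: is_dist_def)
  have P0: "\<And>x z. 0 \<le> ?P x z" using assms point_dist pZ_nn by blast
  have "(\<Sum>z\<in>UNIV. \<Sum>x\<in>UNIV. plog (p x * ?P x z)) \<le> (\<Sum>z\<in>UNIV. plog (\<Sum>x\<in>UNIV. p x * ?P x z))"
    using p0 P0 by (intro sum_mono plog_sum) auto
  also have "\<dots> = (\<Sum>z\<in>UNIV. plog (pZ q g m p c z))" using assms by (simp add: pZ_mix)
  finally have 1: "(\<Sum>z\<in>UNIV. \<Sum>x\<in>UNIV. plog (p x * ?P x z)) \<le> (\<Sum>z\<in>UNIV. plog (pZ q g m p c z))" .
  have "(\<Sum>z\<in>UNIV. \<Sum>x\<in>UNIV. plog (p x * ?P x z)) = (\<Sum>z\<in>UNIV. \<Sum>x\<in>UNIV. ?P x z * plog (p x) + p x * plog (?P x z))"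
    using p0 P0 by (simp add: plog_mult)
  also have "\<dots> = (\<Sum>x\<in>UNIV. \<Sum>z\<in>UNIV. ?P x z * plog (p x) + p x * plog (?P x z))" by (rule sum.swap)
  also have "\<dots> = (\<Sum>x\<in>UNIV. plog (p x) * (\<Sum>z\<in>UNIV. ?P x z) + p x * (\<Sum>z\<in>UNIV. plog (?P x z)))"
    by (simp add: sum.distrib sum_distrib_left sum_distrib_right mult.commute)
  also have "\<dots> = - entropy_X p - (\<Sum>x\<in>UNIV. p x * entropy_Z q g m (point_mass x) c)"
    using assms by (simp add: pZ_point_sum entropy_X_def entropy_Z_def sum.distrib sum_negf)
  finally show ?thesis using 1 by (simp add: entropy_Z_def)
qed



lemma fibre_ne: "\<exists>u. gcode u = x"
proof (cases x)
  case Ala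
  have "gcode (BG,BC,BA) = Ala" by simp
  then show ?thesis using Ala by blast
next
  case Arg
  have "gcode (BA,BG,BA) = Arg" by simp
  then show ?thesis using Arg by blast
next
  case Asn
  have "gcode (BA,BA,BC) = Asn" by simp
  then show ?thesis using Asn by blast
next
  case Asp
  have "gcode (BG,BA,BC) = Asp" by simp
  then show ?thesis using Asp by blast
next
  case Cys
  have "gcode (BT,BG,BC) = Cys" by simp
  then show ?thesis using Cys by blast
next
  case Gln
  have "gcode (BC,BA,BA) = Gln" by simp
  then show ?thesis using Gln by blast
next
  case Glu
  have "gcode (BG,BA,BA) = Glu" by simp
  then show ?thesis using Glu by blast
next
  case Gly
  have "gcode (BG,BG,BA) = Gly" by simp
  then show ?thesis using Gly by blast
next
  case His
  have "gcode (BC,BA,BC) = His" by simp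
  then show ?thesis using His by blast
next
  case Ile
  have "gcode (BA,BT,BA) = Ile" by simp
  then show ?thesis using Ile by blast
next
  case Leu
  have "gcode (BC,BT,BA) = Leu" by simp
  then show ?thesis using Leu by blast
next
  case Lys
  have "gcode (BA,BA,BA) = Lys" by simp
  then show ?thesis using Lys by blast
next
  case Met
  have "gcode (BA,BT,BG) = Met" by simp
  then show ?thesis using Met by blast
next
  case Phe
  have "gcode (BT,BT,BC) = Phe" by simp
  then show ?thesis using Phe by blast
next
  case Pro
  have "gcode (BC,BC,BA) = Pro" by simp
  then show ?thesis using Pro by blast
next
  case Ser
  have "gcode (BA,BG,BC) = Ser" by simp
  then show ?thesis using Ser by blast
next
  case Thr
  have "gcode (BA,BC,BA) = Thr" by simp
  then show ?thesis using Thr by blast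
next
  case Trp
  have "gcode (BT,BG,BG) = Trp" by simp
  then show ?thesis using Trp by blast
next
  case Tyr
  have "gcode (BT,BA,BC) = Tyr" by simp
  then show ?thesis using Tyr by blast
next
  case Val
  have "gcode (BG,BT,BA) = Val" by simp
  then show ?thesis using Val by blast
next
  case Stp
  have "gcode (BT,BA,BA) = Stp" by simp
  then show ?thesis using Stp by blast
qed

definition rep :: "aa \<Rightarrow> codon" where "rep x = (SOME u. gcode u = x)"

lemma rep_in: "gcode (rep x) = x"
  unfolding rep_def using fibre_ne by (rule someI_ex)

lemma cond_ex: "is_cond (\<lambda>x u. if u = rep x then 1 else 0)"
proof -
  have "rep x \<in> fibre x" for x by (simp add: fibre_def rep_in)
  moreover have "finite (fibre x)" for x by simp
  ultimately show ?thesis unfolding is_cond_def by (auto simp: sum.delta')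
qed

lemma entropy_X_point: "entropy_X (point_mass x) = 0"
proof -
  have "\<And>y. plog (point_mass x y) = 0" by (simp add: point_mass_def plog_def)
  then show ?thesis by (simp add: entropy_X_def)
qed

theorem theorem1:
  fixes q \<gamma> :: real and m :: nat and \<xi> :: aa
  assumes "0 \<le> q" "q \<le> 1" "0 \<le> \<gamma>" "\<gamma> \<le> 3/2" "1 \<le> m"
    and "\<forall>\<eta>. max_out_entropy q \<gamma> m \<eta> \<le> max_out_entropy q \<gamma> m \<xi>"
  shows "is_dist (point_mass \<xi>) \<and> rate q \<gamma> m (point_mass \<xi>) = capacity q \<gamma> m"
proof -
  have par: "par q \<gamma>" using assms by (simp add: par_def)
  define S where "S = {c. is_cond c}"
  define M where "M = max_out_entropy q \<gamma> m \<xi>"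
  define h where "h = hrow q \<gamma> m"
  define B where "B = 2 * real (card (UNIV :: codon set))"
  define P where "P = point_mass \<xi>"
  have Sne: "S \<noteq> {}" using cond_ex unfolding S_def by blast
  have Hle: "entropy_Z q \<gamma> m (point_mass x) c \<le> max_out_entropy q \<gamma> m x" if "is_cond c" for x c
    unfolding max_out_entropy_def
  proof (rule cSUP_upper)
    show "c \<in> {c. is_cond c}" using that by simp
    show "bdd_above ((\<lambda>c. entropy_Z q \<gamma> m (point_mass x) c) ` {c. is_cond c})"
      by (rule bdd_aboveI2) (use entropy_bound[OF par point_dist] in auto)
  qed
  have Hle2: "entropy_Z q \<gamma> m (point_mass x) c \<le> M" if "is_cond c" for x c
    using Hle[OF that, of x] assms(6) unfolding M_def by (meson order_trans)
  have eqP: "mutual_info q \<gamma> m P c - entropy_X P = entropy_Z q \<gamma> m P c - h" if "is_cond c" for c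
    using mi_eq[OF par point_dist that] entropy_X_point unfolding P_def h_def by simp
  have rP: "rate q \<gamma> m P = (SUP c\<in>S. entropy_Z q \<gamma> m P c - h)"
    unfolding rate_def S_def using eqP by (intro SUP_cong) auto
  have bddP: "bdd_above ((\<lambda>c. entropy_Z q \<gamma> m P c - h) ` S)"
  proof (rule bdd_aboveI2[where M="B - h"])
    fix c assume "c \<in> S"
    then have "entropy_Z q \<gamma> m P c \<le> B" unfolding B_def S_def P_def
      using entropy_bound[OF par point_dist] by blast
    then show "entropy_Z q \<gamma> m P c - h \<le> B - h" by simp
  qed
  have R1: "rate q \<gamma> m P \<le> M - h"
    unfolding rP by (rule cSUP_least[OF Sne]) (use Hle2 in \<open>auto simp: S_def P_def\<close>)
  have "M \<le> rate q \<gamma> m P + h"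
    unfolding M_def max_out_entropy_def
  proof (rule cSUP_least)
    show "{c. is_cond c} \<noteq> {}" using Sne by (simp add: S_def)
    fix c assume "c \<in> {c. is_cond c}"
    then have "entropy_Z q \<gamma> m P c - h \<le> rate q \<gamma> m P"
      unfolding rP by (intro cSUP_upper bddP) (simp add: S_def)
    then show "entropy_Z q \<gamma> m (point_mass \<xi>) c \<le> rate q \<gamma> m P + h" by (simp add: P_def)
  qed
  with R1 have rPeq: "rate q \<gamma> m P = M - h" by simp
  have Rp: "rate q \<gamma> m p \<le> M - h" if dp: "is_dist p" for p
    unfolding rate_def
  proof (rule cSUP_least)
    show "{c. is_cond c} \<noteq> {}" using Sne by (simp add: S_def)
    fix c assume "c \<in> {c. is_cond c}"
    then have cc: "is_cond c" by simp
    have p0: "\<And>x. 0 \<le> p x" using dp by (simp add: is_dist_def)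
    have "(\<Sum>x\<in>UNIV. p x * entropy_Z q \<gamma> m (point_mass x) c) \<le> (\<Sum>x\<in>UNIV. p x * M)"
      by (intro sum_mono mult_left_mono Hle2 cc p0)
    also have "\<dots> = M" using dp by (simp add: is_dist_def sum_distrib_right[symmetric])
    finally have "(\<Sum>x\<in>UNIV. p x * entropy_Z q \<gamma> m (point_mass x) c) \<le> M" .
    then show "mutual_info q \<gamma> m p c - entropy_X p \<le> M - h"
      using mi_eq[OF par dp cc, of m] mix_ineq[OF par dp cc, of m] unfolding h_def by linarith
  qed
  have "capacity q \<gamma> m = rate q \<gamma> m P"
    unfolding capacity_def
  proof (rule cSup_eq_maximum)
    show "rate q \<gamma> m P \<in> rate q \<gamma> m ` {p. is_dist p}" using point_dist unfolding P_def by blast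
    fix y assume "y \<in> rate q \<gamma> m ` {p. is_dist p}"
    then show "y \<le> rate q \<gamma> m P" using Rp rPeq by auto
  qed
  then show ?thesis using point_dist unfolding P_def by simp
qed


end
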